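(* Let $0<\gamma\le\frac{1-\beta}{(1+\beta)^2\Phi_{\max}^2}$, run TD(0) $\theta_t=\theta_{t-1}+\gamma f_t(\theta_{t-1})$ and set $z_i=\theta_i-\theta^\star$. Then for all integers $k\ge0$, $N\ge1$, $$\sum_{i=k+1}^{k+N-1}\sum_{j=i+1}^{k+N}\mathbb E\big[z_i^\top z_j\big]\le\frac{2}{\gamma(1-\beta)\mu'}\sum_{i=k+1}^{k+N}\mathbb E\big[\|z_i\|_2^2\big].$$
   Context: Setting. Let $\mathcal S=\{1,\dots,n\}$ be a finite state space and $\mathcal A$ a finite action space; fix a stationary randomized policy $\pi$, transition probabilities $P(s'|s,a)$, a reward function $r$ with $|r(s,a)|\le R_{\max}$, and a discount factor $\beta\in(0,1)$. Let $P^\pi(s,s')=\sum_a\pi(s,a)P(s'|s,a)$, assumed irreducible with stationary distribution $\rho$, $D=\mathrm{diag}(\rho)$. Features $\phi:\mathcal S\to\mathbb R^d$ with $\|\phi(s)\|_2\le\Phi_{\max}$, $\Phi\in\mathbb R^{n\times d}$ with rows $\phi(s)^\top$ of full column rank, $R(s)=\sum_a\pi(s,a)r(s,a)$, $A=\Phi^\top D(I-\beta P^\pi)\Phi$, $b=\Phi^\top DR$, $\theta^\star=A^{-1}b$, $B=\sum_s\rho(s)\phi(s)\phi(s)^\top$ with minimum eigenvalue $\mu'>0$. Samples $(s_t,a_t,r_t,s'_t)_{t\ge1}$ i.i.d. with $s_t\sim\rho$, $a_t\sim\pi(s_t,\cdot)$, $r_t=r(s_t,a_t)$, $s'_t\sim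 P(\cdot|s_t,a_t)$, independent of $\theta_0$; $f_t(\theta)=(r_t+\beta\theta^\top\phi(s'_t)-\theta^\top\phi(s_t))\phi(s_t)$. *)

theory Defs
  imports "HOL-Analysis.Analysis" "HOL-Probability.Probability"
begin

text \<open>Policy-induced transition matrix P^pi(s,s') = sum_a pi(s,a) P(s'|s,a).
  Transition probabilities P(s'|s,a) are written  P s a s'.\<close>
definition Ppi :: "('s::finite \<Rightarrow> 'act::finite \<Rightarrow> real) \<Rightarrow> ('s \<Rightarrow> 'act \<Rightarrow> 's \<Rightarrow> real) \<Rightarrow> real^'s^'s" where
  "Ppi pol P = (\<chi> s s'. \<Sum>a\<in>UNIV. pol s a * P s a s')"

definition irreducible_chain :: "real^'s^'s \<Rightarrow> bool" where
  "irreducible_chain Q \<longleftrightarrow> (\<forall>s s'. (s, s') \<in> {(x, y). Q $ x $ y > 0}\<^sup>+)"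

definition stationary_dist :: "real^'s^'s \<Rightarrow> ('s::finite \<Rightarrow> real) \<Rightarrow> bool" where
  "stationary_dist Q rho \<longleftrightarrow> (\<forall>s. rho s \<ge> 0) \<and> (\<Sum>s\<in>UNIV. rho s) = 1 \<and>
     (\<forall>s'. (\<Sum>s\<in>UNIV. rho s * Q $ s $ s') = rho s')"

definition diagm :: "('s::finite \<Rightarrow> real) \<Rightarrow> real^'s^'s" where
  "diagm rho = (\<chi> i j. if i = j then rho i else 0)"

definition feat_matrix :: "('s \<Rightarrow> real^'d) \<Rightarrow> real^'d^'s" where
  "feat_matrix phi = (\<chi> s. phi s)"

definition TD_A :: "('s::finite \<Rightarrow> 'act::finite \<Rightarrow> real) \<Rightarrow> ('s \<Rightarrow> 'act \<Rightarrow> 's \<Rightarrow> real)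
    \<Rightarrow> real \<Rightarrow> ('s \<Rightarrow> real) \<Rightarrow> ('s \<Rightarrow> real^'d::finite) \<Rightarrow> real^'d^'d" where
  "TD_A pol P beta rho phi = transpose (feat_matrix phi) ** diagm rho **
      (mat 1 - beta *\<^sub>R Ppi pol P) ** feat_matrix phi"

definition TD_b :: "('s::finite \<Rightarrow> 'act::finite \<Rightarrow> real) \<Rightarrow> ('s \<Rightarrow> 'act \<Rightarrow> real)
    \<Rightarrow> ('s \<Rightarrow> real) \<Rightarrow> ('s \<Rightarrow> real^'d::finite) \<Rightarrow> real^'d" where
  "TD_b pol r rho phi = transpose (feat_matrix phi) *v (diagm rho *v (\<chi> s. \<Sum>a\<in>UNIV. pol s a * r s a))"

definition theta_star :: "('s::finite \<Rightarrow> 'act::finite \<Rightarrow> real) \<Rightarrow> ('s \<Rightarrow> 'act \<Rightarrow> 's \<Rightarrow> real)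
    \<Rightarrow> ('s \<Rightarrow> 'act \<Rightarrow> real) \<Rightarrow> real \<Rightarrow> ('s \<Rightarrow> real) \<Rightarrow> ('s \<Rightarrow> real^'d::finite) \<Rightarrow> real^'d" where
  "theta_star pol P r beta rho phi = matrix_inv (TD_A pol P beta rho phi) *v TD_b pol r rho phi"

definition Bmat :: "('s::finite \<Rightarrow> real) \<Rightarrow> ('s \<Rightarrow> real^'d::finite) \<Rightarrow> real^'d^'d" where
  "Bmat rho phi = (\<Sum>s\<in>UNIV. rho s *\<^sub>R (\<chi> i j. phi s $ i * phi s $ j))"

definition min_eigenvalue :: "real^'d::finite^'d \<Rightarrow> real" where
  "min_eigenvalue M = Min {mu. \<exists>v. v \<noteq> 0 \<and> M *v v = mu *\<^sub>R v}"

primrec td_iter :: "('s \<Rightarrow> 'act \<Rightarrow> real) \<Rightarrow> real \<Rightarrow> ('s \<Rightarrow> real^'d::finite) \<Rightarrow> real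
    \<Rightarrow> (nat \<Rightarrow> 'w \<Rightarrow> 's \<times> 'act \<times> 's) \<Rightarrow> ('w \<Rightarrow> real^'d) \<Rightarrow> nat \<Rightarrow> 'w \<Rightarrow> real^'d" where
  "td_iter r beta phi gamma X th0 0 \<omega> = th0 \<omega>"
| "td_iter r beta phi gamma X th0 (Suc t) \<omega> =
     (let \<theta> = td_iter r beta phi gamma X th0 t \<omega>;
          (s, a, s') = X (Suc t) \<omega>
      in \<theta> + gamma *\<^sub>R ((r s a + beta * (\<theta> \<bullet> phi s') - \<theta> \<bullet> phi s) *\<^sub>R phi s))"

end

theory Submission
  imports Defs
begin



lemma wcs:
  fixes w a b :: "'s \<Rightarrow> real"
  assumes "\<And>s. w s \<ge> 0"
  shows "(\<Sum>s\<in>S. w s * a s * b s)\<^sup>2 \<le> (\<Sum>s\<in>S. w s * (a s)\<^sup>2) * (\<Sum>s\<in>S. w s * (b s)\<^sup>2)"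
proof -
  have "(\<Sum>s\<in>S. (sqrt (w s) * a s) * (sqrt (w s) * b s))\<^sup>2
     \<le> (\<Sum>s\<in>S. (sqrt (w s) * a s)\<^sup>2) * (\<Sum>s\<in>S. (sqrt (w s) * b s)\<^sup>2)"
    by (rule Cauchy_Schwarz_ineq_sum)
  moreover have "\<And>s. (sqrt (w s) * a s) * (sqrt (w s) * b s) = w s * a s * b s"
    using assms by (simp add: algebra_simps)
  moreover have "\<And>s. (sqrt (w s) * a s)\<^sup>2 = w s * (a s)\<^sup>2" "\<And>s. (sqrt (w s) * b s)\<^sup>2 = w s * (b s)\<^sup>2"
    using assms by (simp_all add: power_mult_distrib)
  ultimately show ?thesis by simp
qed

lemma sym_mv:
  fixes B :: "real^'d^'d"
  assumes sym: "\<And>i j. B$i$j = B$j$i"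
  shows "(B *v x) \<bullet> y = x \<bullet> (B *v y)"
proof -
  have "(B *v x) \<bullet> y = (\<Sum>i\<in>UNIV. \<Sum>j\<in>UNIV. B$i$j * x$j * y$i)"
    by (simp add: inner_vec_def matrix_vector_mult_def sum_distrib_right)
  also have "\<dots> = (\<Sum>j\<in>UNIV. \<Sum>i\<in>UNIV. B$i$j * x$j * y$i)" by (rule sum.swap)
  also have "\<dots> = x \<bullet> (B *v y)"
    by (simp add: inner_vec_def matrix_vector_mult_def sum_distrib_left sym mult_ac)
  finally show ?thesis .
qed

lemma min_eig_le:
  fixes B :: "real^'d^'d"
  assumes sym: "\<And>i j. B$i$j = B$j$i"
  shows "min_eigenvalue B * (norm v)\<^sup>2 \<le> v \<bullet> (B *v v)"
proof -
  define S where "S = {mu. \<exists>v. v \<noteq> 0 \<and> B *v v = mu *\<^sub>R v}"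
  have symm: "\<And>x y. (B *v x) \<bullet> y = x \<bullet> (B *v y)" using sym_mv[OF sym] .
  have finS: "finite S"
  proof (rule ccontr)
    assume "infinite S"
    then obtain T where T: "T \<subseteq> S" "finite T" "card T = Suc CARD('d)"
      using infinite_arbitrarily_large by blast
    define f where "f mu = (SOME v. v \<noteq> 0 \<and> B *v v = mu *\<^sub>R v)" for mu
    have f: "f mu \<noteq> 0 \<and> B *v f mu = mu *\<^sub>R f mu" if "mu \<in> S" for mu
      using that unfolding S_def f_def by (metis (mono_tags, lifting) mem_Collect_eq someI_ex)
    have inj: "inj_on f T"
    proof (rule inj_onI)
      fix m1 m2 assume "m1 \<in> T" "m2 \<in> T" "f m1 = f m2"
      then have "m1 *\<^sub>R f m1 = m2 *\<^sub>R f m1" "f m1 \<noteq> 0" using f T(1) by (metis subsetD)+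
      then show "m1 = m2" by (simp add: scaleR_cancel_right)
    qed
    have po: "pairwise orthogonal (f ` T)"
    proof (rule pairwiseI, clarsimp)
      fix m1 m2 assume m: "m1 \<in> T" "m2 \<in> T" "f m1 \<noteq> f m2"
      then have "m1 \<noteq> m2" by auto
      have e1: "B *v f m1 = m1 *\<^sub>R f m1" and e2: "B *v f m2 = m2 *\<^sub>R f m2" using f T(1) m by auto
      have "m1 * (f m1 \<bullet> f m2) = m2 * (f m1 \<bullet> f m2)"
        using symm[of "f m1" "f m2"] by (simp add: e1 e2)
      then show "orthogonal (f m1) (f m2)" using \<open>m1 \<noteq> m2\<close> by (simp add: orthogonal_def)
    qed
    have "0 \<notin> f ` T" using f T(1) by auto
    then have "independent (f ` T)" using po pairwise_orthogonal_independent by blast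
    then have "card (f ` T) \<le> CARD('d)" using independent_card_le by (metis DIM_cart DIM_real mult_1_right)
    moreover have "card (f ` T) = card T" using card_image[OF inj] .
    ultimately show False using T(3) by simp
  qed
  define h where "h x = x \<bullet> (B *v x)" for x :: "real^'d"
  have "continuous_on (sphere 0 1) h" unfolding h_def
    by (intro continuous_intros linear_continuous_on matrix_vector_mul_linear) 
  moreover have "sphere (0::real^'d) 1 \<noteq> {}" by simp
  ultimately obtain x0 where x0: "x0 \<in> sphere 0 1" "\<And>y. y \<in> sphere 0 1 \<Longrightarrow> h x0 \<le> h y"
    using continuous_attains_inf[OF compact_sphere] by blast
  define m where "m = h x0"
  have hom: "h (c *\<^sub>R x) = c\<^sup>2 * h x" for c x
    by (simp add: h_def matrix_vector_mult_scaleR power2_eq_square)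
  have mle: "m * (norm y)\<^sup>2 \<le> h y" for y
  proof (cases "y = 0")
    case True then show ?thesis by (simp add: h_def)
  next
    case False
    then have "h x0 \<le> h ((1/norm y) *\<^sub>R y)" using x0(2) by simp
    also have "\<dots> = h y / (norm y)\<^sup>2" by (simp add: hom power_divide)
    finally show ?thesis using False by (simp add: m_def field_simps)
  qed
  define q where "q y = h y - m * (norm y)\<^sup>2" for y
  have qnn: "q y \<ge> 0" for y using mle[of y] by (simp add: q_def)
  have nx0: "norm x0 = 1" using x0 by simp
  have qx0: "q x0 = 0" by (simp add: q_def m_def nx0)
  define w where "w = B *v x0 - m *\<^sub>R x0"
  have qexp: "q (x0 - t *\<^sub>R w) = q x0 - 2 * t * (w \<bullet> w) + t\<^sup>2 * q w" for t
  proof -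
    have h1: "h (x0 - t *\<^sub>R w) = h x0 - 2 * t * (w \<bullet> (B *v x0)) + t\<^sup>2 * h w"
      unfolding h_def using symm[of x0 w]
      by (simp add: matrix_vector_mult_diff_distrib matrix_vector_mult_scaleR inner_diff_left inner_diff_right
          power2_eq_square algebra_simps inner_commute)
    have n1: "(norm (x0 - t *\<^sub>R w))\<^sup>2 = (norm x0)\<^sup>2 - 2 * t * (w \<bullet> x0) + t\<^sup>2 * (norm w)\<^sup>2"
      unfolding power2_norm_eq_inner by (simp add: inner_diff_left inner_diff_right power2_eq_square algebra_simps inner_commute)
    have E3: "q (x0 - t *\<^sub>R w) = q x0 - 2 * t * (w \<bullet> (B *v x0) - m * (w \<bullet> x0)) + t\<^sup>2 * q w"
      unfolding q_def h1 n1 by (simp add: algebra_simps)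
    have E4: "w \<bullet> w = w \<bullet> (B *v x0) - m * (w \<bullet> x0)"
      by (subst (2) w_def) (simp add: inner_diff_right)
    show ?thesis unfolding E4 by (rule E3)
  qed
  have "w = 0"
  proof (cases "q w = 0")
    case True
    then have "0 \<le> - 2 * (w \<bullet> w)" using qnn[of "x0 - 1 *\<^sub>R w"] qexp[of 1] qx0 by simp
    then have "w \<bullet> w = 0" using inner_ge_zero[of w] by linarith
    then show ?thesis by simp
  next
    case False
    then have qp: "q w > 0" using qnn[of w] by simp
    define t where "t = (w \<bullet> w) / q w"
    have "0 \<le> - 2 * t * (w \<bullet> w) + t\<^sup>2 * q w" using qnn[of "x0 - t *\<^sub>R w"] qexp[of t] qx0 by simp
    also have "\<dots> = - ((w \<bullet> w)\<^sup>2 / q w)" using qp by (simp add: t_def power2_eq_square field_simps)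
    finally have "(w \<bullet> w)\<^sup>2 / q w \<le> 0" by linarith
    then have "(w \<bullet> w)\<^sup>2 \<le> 0" using qp by (simp add: divide_le_0_iff)
    then have "w \<bullet> w = 0" using inner_ge_zero[of w] by (metis power2_eq_square mult_le_0_iff order_antisym inner_ge_zero)
    then show ?thesis by simp
  qed
  then have "m \<in> S" unfolding S_def w_def using nx0 by (intro CollectI exI[of _ x0]) auto
  then have "min_eigenvalue B \<le> m" unfolding min_eigenvalue_def S_def[symmetric] using finS by simp
  then have "min_eigenvalue B * (norm v)\<^sup>2 \<le> m * (norm v)\<^sup>2" by (simp add: mult_right_mono)
  also have "\<dots> \<le> v \<bullet> (B *v v)" using mle[of v] by (simp add: h_def)
  finally show ?thesis .
qed




lemma featv: "feat_matrix phi *v v = (\<chi> s. phi s \<bullet> v)"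
  by (simp add: vec_eq_iff matrix_vector_mult_def feat_matrix_def inner_vec_def)

lemma featTv: "transpose (feat_matrix phi) *v y = (\<Sum>s\<in>UNIV. (y$s) *\<^sub>R phi s)"
  by (simp add: vec_eq_iff matrix_vector_mult_def feat_matrix_def transpose_def sum_component mult.commute)

lemma diagv: "diagm rho *v y = (\<chi> s. rho s * y$s)"
proof -
  have "\<And>i. (\<Sum>j\<in>UNIV. (if i = j then rho i else 0) * y$j) = rho i * y$i"
  proof -
    fix i
    have "(\<Sum>j\<in>UNIV. (if i = j then rho i else 0) * y$j) = (\<Sum>j\<in>UNIV. if i = j then rho i * y$i else 0)"
      by (rule sum.cong) auto
    then show "(\<Sum>j\<in>UNIV. (if i = j then rho i else 0) * y$j) = rho i * y$i" by simp
  qed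
  then show ?thesis by (simp add: vec_eq_iff matrix_vector_mult_def diagm_def)
qed

lemma Ppiv: "Ppi pol P *v y = (\<chi> s. \<Sum>s'\<in>UNIV. (\<Sum>a\<in>UNIV. pol s a * P s a s') * y$s')"
  by (simp add: vec_eq_iff matrix_vector_mult_def Ppi_def)

lemma TD_A_v: "TD_A pol P beta rho phi *v v =
   (\<Sum>s\<in>UNIV. (rho s * (phi s \<bullet> v - beta * (\<Sum>s'\<in>UNIV. (\<Sum>a\<in>UNIV. pol s a * P s a s') * (phi s' \<bullet> v)))) *\<^sub>R phi s)" (is "_ = ?rhs")
proof -
  have "TD_A pol P beta rho phi *v v = transpose (feat_matrix phi) *v (diagm rho *v ((mat 1 - beta *\<^sub>R Ppi pol P) *v (feat_matrix phi *v v)))"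
    by (simp add: TD_A_def matrix_vector_mul_assoc[symmetric])
  also have "\<dots> = transpose (feat_matrix phi) *v (diagm rho *v ((feat_matrix phi *v v) - beta *\<^sub>R (Ppi pol P *v (feat_matrix phi *v v))))"
    by (simp add: matrix_vector_mult_diff_rdistrib scaleR_matrix_vector_assoc)
  also have "\<dots> = ?rhs"
    unfolding featTv diagv Ppiv featv by (simp add: algebra_simps)
  finally show ?thesis .
qed

lemma TD_b_eq: "TD_b pol r rho phi = (\<Sum>s\<in>UNIV. (rho s * (\<Sum>a\<in>UNIV. pol s a * r s a)) *\<^sub>R phi s)"
  unfolding TD_b_def featTv diagv by simp

lemma Bmat_sym: "Bmat rho phi $ i $ j = Bmat rho phi $ j $ i"
  by (simp add: Bmat_def sum_component mult_ac)

lemma Bmat_quad: "v \<bullet> (Bmat rho phi *v v) = (\<Sum>s\<in>UNIV. rho s * (phi s \<bullet> v)\<^sup>2)"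
proof -
  have Bv: "Bmat rho phi *v v = (\<Sum>s\<in>UNIV. (rho s * (phi s \<bullet> v)) *\<^sub>R phi s)"
  proof (subst vec_eq_iff, intro allI)
    fix i
    have "(Bmat rho phi *v v) $ i = (\<Sum>j\<in>UNIV. \<Sum>s\<in>UNIV. rho s * phi s $ i * phi s $ j * v $ j)"
      by (simp add: matrix_vector_mult_def Bmat_def sum_component sum_distrib_right sum_distrib_left mult_ac)
    also have "\<dots> = (\<Sum>s\<in>UNIV. \<Sum>j\<in>UNIV. rho s * phi s $ i * phi s $ j * v $ j)" by (rule sum.swap)
    also have "\<dots> = (\<Sum>s\<in>UNIV. (rho s * (phi s \<bullet> v)) *\<^sub>R phi s) $ i"
      by (simp add: sum_component inner_vec_def sum_distrib_left sum_distrib_right mult_ac)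
    finally show "(Bmat rho phi *v v) $ i = (\<Sum>s\<in>UNIV. (rho s * (phi s \<bullet> v)) *\<^sub>R phi s) $ i" .
  qed
  show ?thesis unfolding Bv by (simp add: inner_sum_right power2_eq_square mult_ac inner_commute)
qed




definition Pp :: "('s \<Rightarrow> 'act::finite \<Rightarrow> real) \<Rightarrow> ('s \<Rightarrow> 'act \<Rightarrow> 's \<Rightarrow> real) \<Rightarrow> 's \<Rightarrow> 's \<Rightarrow> real" where
  "Pp pol P s s' = (\<Sum>a\<in>UNIV. pol s a * P s a s')"

lemma TD_A_v': "TD_A pol P beta rho phi *v v =
   (\<Sum>s\<in>UNIV. (rho s * (phi s \<bullet> v - beta * (\<Sum>s'\<in>UNIV. Pp pol P s s' * (phi s' \<bullet> v)))) *\<^sub>R phi s)"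
  unfolding TD_A_v Pp_def ..

lemma sum_triple:
  "(\<Sum>x\<in>(UNIV::('a::finite \<times> 'b::finite \<times> 'c::finite) set). g x) = (\<Sum>s\<in>UNIV. \<Sum>a\<in>UNIV. \<Sum>s'\<in>UNIV. g (s,a,s'))"
  unfolding sum.cartesian_product by (simp add: split_beta)

definition Fupd :: "('s \<Rightarrow> 'act \<Rightarrow> real) \<Rightarrow> real \<Rightarrow> ('s \<Rightarrow> real^'d::finite) \<Rightarrow> 's \<times> 'act \<times> 's \<Rightarrow> real^'d \<Rightarrow> real^'d" where
  "Fupd r beta phi x th = (case x of (s, a, s') \<Rightarrow> (r s a + beta * (th \<bullet> phi s') - th \<bullet> phi s) *\<^sub>R phi s)"

definition pw :: "('s \<Rightarrow> 'act \<Rightarrow> real) \<Rightarrow> ('s \<Rightarrow> 'act \<Rightarrow> 's \<Rightarrow> real) \<Rightarrow> ('s \<Rightarrow> real) \<Rightarrow> 's \<times> 'act \<times> 's \<Rightarrow> real" where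
  "pw pol P rho x = (case x of (s, a, s') \<Rightarrow> rho s * pol s a * P s a s')"

locale td_alg =
  fixes pol :: "'s::finite \<Rightarrow> 'act::finite \<Rightarrow> real" and P :: "'s \<Rightarrow> 'act \<Rightarrow> 's \<Rightarrow> real"
    and beta :: real and rho :: "'s \<Rightarrow> real" and phi :: "'s \<Rightarrow> real^'d::finite" and Phimax :: real
  assumes pol: "\<forall>s a. pol s a \<ge> 0" "\<forall>s. (\<Sum>a\<in>UNIV. pol s a) = 1"
    and P: "\<forall>s a s'. P s a s' \<ge> 0" "\<forall>s a. (\<Sum>s'\<in>UNIV. P s a s') = 1"
    and beta: "0 < beta" "beta < 1"
    and stat: "stationary_dist (Ppi pol P) rho"
    and phi_bd: "\<forall>s. norm (phi s) \<le> Phimax"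
begin

lemma Pp_nn: "Pp pol P s s' \<ge> 0"
  unfolding Pp_def using pol P by (simp add: sum_nonneg)

lemma Pp_row: "(\<Sum>s'\<in>UNIV. Pp pol P s s') = 1"
proof -
  have "(\<Sum>s'\<in>UNIV. Pp pol P s s') = (\<Sum>a\<in>UNIV. \<Sum>s'\<in>UNIV. pol s a * P s a s')"
    unfolding Pp_def by (rule sum.swap)
  also have "\<dots> = (\<Sum>a\<in>UNIV. pol s a)" using P by (simp add: sum_distrib_left[symmetric])
  finally show ?thesis using pol by simp
qed

lemma rho_nn: "rho s \<ge> 0" using stat unfolding stationary_dist_def by simp
lemma rho_sum: "(\<Sum>s\<in>UNIV. rho s) = 1" using stat unfolding stationary_dist_def by simp
lemma rho_stat: "(\<Sum>s\<in>UNIV. rho s * Pp pol P s s') = rho s'"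
  using stat unfolding stationary_dist_def Ppi_def Pp_def by simp

lemma jensen: "(\<Sum>s\<in>UNIV. rho s * (\<Sum>s'\<in>UNIV. Pp pol P s s' * y s')\<^sup>2) \<le> (\<Sum>s\<in>UNIV. rho s * (y s)\<^sup>2)"
proof -
  have "(\<Sum>s'\<in>UNIV. Pp pol P s s' * y s')\<^sup>2 \<le> (\<Sum>s'\<in>UNIV. Pp pol P s s' * (y s')\<^sup>2)" for s
  proof -
    have "(\<Sum>s'\<in>UNIV. Pp pol P s s' * 1 * y s')\<^sup>2 \<le> (\<Sum>s'\<in>UNIV. Pp pol P s s' * 1\<^sup>2) * (\<Sum>s'\<in>UNIV. Pp pol P s s' * (y s')\<^sup>2)"
      by (rule wcs) (rule Pp_nn)
    then show ?thesis using Pp_row[of s] by simp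
  qed
  then have "(\<Sum>s\<in>UNIV. rho s * (\<Sum>s'\<in>UNIV. Pp pol P s s' * y s')\<^sup>2) \<le> (\<Sum>s\<in>UNIV. rho s * (\<Sum>s'\<in>UNIV. Pp pol P s s' * (y s')\<^sup>2))"
    by (intro sum_mono mult_left_mono rho_nn) auto
  also have "\<dots> = (\<Sum>s'\<in>UNIV. \<Sum>s\<in>UNIV. rho s * Pp pol P s s' * (y s')\<^sup>2)"
    by (simp add: sum_distrib_left mult_ac) (rule sum.swap)
  also have "\<dots> = (\<Sum>s'\<in>UNIV. rho s' * (y s')\<^sup>2)"
    by (simp add: sum_distrib_right[symmetric] rho_stat)
  finally show ?thesis .
qed

lemma cs_rho: "(\<Sum>s\<in>UNIV. rho s * a s * b s) \<le> sqrt (\<Sum>s\<in>UNIV. rho s * (a s)\<^sup>2) * sqrt (\<Sum>s\<in>UNIV. rho s * (b s)\<^sup>2)"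
proof -
  have "(\<Sum>s\<in>UNIV. rho s * a s * b s)\<^sup>2 \<le> (\<Sum>s\<in>UNIV. rho s * (a s)\<^sup>2) * (\<Sum>s\<in>UNIV. rho s * (b s)\<^sup>2)"
    by (rule wcs) (rule rho_nn)
  then have "(\<Sum>s\<in>UNIV. rho s * a s * b s) \<le> sqrt ((\<Sum>s\<in>UNIV. rho s * (a s)\<^sup>2) * (\<Sum>s\<in>UNIV. rho s * (b s)\<^sup>2))"
    by (rule real_le_rsqrt)
  then show ?thesis by (simp add: real_sqrt_mult)
qed

definition "Qf v = (\<Sum>s\<in>UNIV. rho s * (phi s \<bullet> v)\<^sup>2)"

lemma Qf_nn: "Qf v \<ge> 0" unfolding Qf_def by (intro sum_nonneg mult_nonneg_nonneg rho_nn) auto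

lemma PU_bound: "(\<Sum>s\<in>UNIV. rho s * (\<Sum>s'\<in>UNIV. Pp pol P s s' * (phi s' \<bullet> v))\<^sup>2) \<le> Qf v"
  unfolding Qf_def by (rule jensen)

lemma UPU_bound: "\<bar>\<Sum>s\<in>UNIV. rho s * (phi s \<bullet> v) * (\<Sum>s'\<in>UNIV. Pp pol P s s' * (phi s' \<bullet> v))\<bar> \<le> Qf v"
proof -
  let ?U = "\<lambda>s. phi s \<bullet> v" and ?PU = "\<lambda>s. \<Sum>s'\<in>UNIV. Pp pol P s s' * (phi s' \<bullet> v)"
  have "(\<Sum>s\<in>UNIV. rho s * ?U s * ?PU s)\<^sup>2 \<le> (\<Sum>s\<in>UNIV. rho s * (?U s)\<^sup>2) * (\<Sum>s\<in>UNIV. rho s * (?PU s)\<^sup>2)"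
    by (rule wcs) (rule rho_nn)
  also have "\<dots> \<le> Qf v * Qf v"
    using PU_bound[of v] Qf_nn[of v] unfolding Qf_def[symmetric] by (intro mult_left_mono) auto
  finally have "(\<Sum>s\<in>UNIV. rho s * ?U s * ?PU s)\<^sup>2 \<le> (Qf v)\<^sup>2" by (simp add: power2_eq_square)
  then have "\<bar>\<Sum>s\<in>UNIV. rho s * ?U s * ?PU s\<bar> \<le> \<bar>Qf v\<bar>" by (simp only: abs_le_square_iff)
  then show ?thesis using Qf_nn[of v] by simp
qed

lemma vAv: "v \<bullet> (TD_A pol P beta rho phi *v v) \<ge> (1 - beta) * Qf v"
proof -
  let ?U = "\<lambda>s. phi s \<bullet> v" and ?PU = "\<lambda>s. \<Sum>s'\<in>UNIV. Pp pol P s s' * (phi s' \<bullet> v)"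
  have "v \<bullet> (TD_A pol P beta rho phi *v v) = (\<Sum>s\<in>UNIV. rho s * (?U s - beta * ?PU s) * ?U s)"
    unfolding TD_A_v' by (simp add: inner_sum_right inner_commute mult_ac)
  also have "\<dots> = Qf v - beta * (\<Sum>s\<in>UNIV. rho s * ?U s * ?PU s)"
    unfolding Qf_def by (simp add: algebra_simps power2_eq_square sum_subtractf sum_distrib_left)
  also have "\<dots> \<ge> Qf v - beta * Qf v"
    using UPU_bound[of v] beta by (intro diff_left_mono mult_left_mono) auto
  finally show ?thesis by (simp add: algebra_simps)
qed

lemma W_bound: "(\<Sum>s\<in>UNIV. rho s * (phi s \<bullet> v - beta * (\<Sum>s'\<in>UNIV. Pp pol P s s' * (phi s' \<bullet> v)))\<^sup>2) \<le> (1 + beta)\<^sup>2 * Qf v"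
proof -
  let ?U = "\<lambda>s. phi s \<bullet> v" and ?PU = "\<lambda>s. \<Sum>s'\<in>UNIV. Pp pol P s s' * (phi s' \<bullet> v)"
  have "(\<Sum>s\<in>UNIV. rho s * (?U s - beta * ?PU s)\<^sup>2) = Qf v - 2 * beta * (\<Sum>s\<in>UNIV. rho s * ?U s * ?PU s) + beta\<^sup>2 * (\<Sum>s\<in>UNIV. rho s * (?PU s)\<^sup>2)"
    unfolding Qf_def by (simp add: algebra_simps power2_eq_square sum_subtractf sum.distrib sum_distrib_left)
  also have "\<dots> \<le> Qf v + 2 * beta * Qf v + beta\<^sup>2 * Qf v"
  proof -
    have "- (2 * beta * (\<Sum>s\<in>UNIV. rho s * ?U s * ?PU s)) \<le> 2 * beta * Qf v"
    proof -
      have "beta * (- (\<Sum>s\<in>UNIV. rho s * ?U s * ?PU s)) \<le> beta * Qf v"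
        using UPU_bound[of v] beta by (intro mult_left_mono) (auto simp: abs_le_iff)
      then show ?thesis by simp
    qed
    moreover have "beta\<^sup>2 * (\<Sum>s\<in>UNIV. rho s * (?PU s)\<^sup>2) \<le> beta\<^sup>2 * Qf v"
      using PU_bound[of v] by (intro mult_left_mono) auto
    ultimately show ?thesis by linarith
  qed
  also have "\<dots> = (1 + beta)\<^sup>2 * Qf v" by (simp add: algebra_simps power2_eq_square)
  finally show ?thesis .
qed

lemma Av_norm: "(norm (TD_A pol P beta rho phi *v v))\<^sup>2 \<le> Phimax\<^sup>2 * ((1 + beta)\<^sup>2 * Qf v)"
proof -
  let ?W = "\<lambda>s. phi s \<bullet> v - beta * (\<Sum>s'\<in>UNIV. Pp pol P s s' * (phi s' \<bullet> v))"
  define y where "y = TD_A pol P beta rho phi *v v"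
  have Pm: "Phimax \<ge> 0" using phi_bd norm_ge_zero order_trans by blast
  have "(norm y)\<^sup>2 = y \<bullet> y" by (simp add: power2_norm_eq_inner)
  also have "\<dots> = (\<Sum>s\<in>UNIV. rho s * ?W s * (phi s \<bullet> y))"
    unfolding y_def[symmetric] by (subst (1) y_def) (simp add: TD_A_v' inner_sum_left mult_ac)
  also have "\<dots> \<le> sqrt (\<Sum>s\<in>UNIV. rho s * (?W s)\<^sup>2) * sqrt (\<Sum>s\<in>UNIV. rho s * (phi s \<bullet> y)\<^sup>2)"
    by (rule cs_rho)
  also have "\<dots> \<le> sqrt ((1 + beta)\<^sup>2 * Qf v) * (Phimax * norm y)"
  proof (rule mult_mono)
    show "sqrt (\<Sum>s\<in>UNIV. rho s * (?W s)\<^sup>2) \<le> sqrt ((1 + beta)\<^sup>2 * Qf v)"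
      using W_bound by simp
    have "(\<Sum>s\<in>UNIV. rho s * (phi s \<bullet> y)\<^sup>2) \<le> (\<Sum>s\<in>UNIV. rho s * (Phimax * norm y)\<^sup>2)"
    proof (intro sum_mono mult_left_mono rho_nn)
      fix s
      have "\<bar>phi s \<bullet> y\<bar> \<le> norm (phi s) * norm y" by (rule Cauchy_Schwarz_ineq2)
      also have "\<dots> \<le> Phimax * norm y" using phi_bd by (simp add: mult_right_mono)
      finally show "(phi s \<bullet> y)\<^sup>2 \<le> (Phimax * norm y)\<^sup>2" by (metis power2_abs power_mono abs_ge_zero)
    qed
    also have "\<dots> = (Phimax * norm y)\<^sup>2" by (simp add: sum_distrib_right[symmetric] rho_sum)
    finally have "(\<Sum>s\<in>UNIV. rho s * (phi s \<bullet> y)\<^sup>2) \<le> (Phimax * norm y)\<^sup>2" .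
    from real_sqrt_le_mono[OF this] show "sqrt (\<Sum>s\<in>UNIV. rho s * (phi s \<bullet> y)\<^sup>2) \<le> Phimax * norm y"
      using Pm by simp
  qed (auto simp: Pm Qf_nn rho_nn intro!: sum_nonneg mult_nonneg_nonneg)
  finally have ineq: "(norm y)\<^sup>2 \<le> sqrt ((1 + beta)\<^sup>2 * Qf v) * Phimax * norm y" by (simp add: mult_ac)
  show ?thesis
  proof (cases "norm y = 0")
    case True then show ?thesis unfolding y_def[symmetric] using Qf_nn[of v] by simp
  next
    case False
    then have "norm y \<le> sqrt ((1 + beta)\<^sup>2 * Qf v) * Phimax" using ineq
      by (simp add: power2_eq_square mult_le_cancel_right)
    then have "(norm y)\<^sup>2 \<le> (sqrt ((1 + beta)\<^sup>2 * Qf v) * Phimax)\<^sup>2"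
      by (simp add: power_mono)
    also have "\<dots> = Phimax\<^sup>2 * ((1 + beta)\<^sup>2 * Qf v)" using Qf_nn[of v] beta
      by (simp add: power_mult_distrib)
    finally show ?thesis unfolding y_def .
  qed
qed

lemma Qf_eig: "Qf v \<ge> min_eigenvalue (Bmat rho phi) * (norm v)\<^sup>2"
  using min_eig_le[of "Bmat rho phi" v, OF Bmat_sym] Bmat_quad[of v rho phi]
  by (simp add: Qf_def inner_commute)


lemma contraction:
  assumes mu: "min_eigenvalue (Bmat rho phi) > 0"
    and g: "0 < gamma" "gamma \<le> (1 - beta) / ((1 + beta)\<^sup>2 * Phimax\<^sup>2)"
  shows "(norm (v - gamma *\<^sub>R (TD_A pol P beta rho phi *v v)))\<^sup>2
           \<le> (1 - gamma * (1 - beta) * min_eigenvalue (Bmat rho phi)) * (norm v)\<^sup>2"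
proof -
  define K where "K = (1 + beta)\<^sup>2 * Phimax\<^sup>2"
  define mu' where "mu' = min_eigenvalue (Bmat rho phi)"
  define A where "A = TD_A pol P beta rho phi"
  have Kp: "K > 0"
  proof (rule ccontr)
    assume "\<not> K > 0"
    moreover have "K \<ge> 0" unfolding K_def by simp
    ultimately have "K = 0" by simp
    then have "(1 - beta) / ((1 + beta)\<^sup>2 * Phimax\<^sup>2) = 0" unfolding K_def by simp
    with g show False by linarith
  qed
  have gK: "gamma * K \<le> 1 - beta" using g Kp by (simp add: K_def pos_le_divide_eq)
  have "(norm (v - gamma *\<^sub>R (A *v v)))\<^sup>2 = (norm v)\<^sup>2 - 2 * gamma * (v \<bullet> (A *v v)) + gamma\<^sup>2 * (norm (A *v v))\<^sup>2"
    unfolding power2_norm_eq_inner by (simp add: inner_diff_left inner_diff_right power2_eq_square algebra_simps inner_commute)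
  also have "\<dots> \<le> (norm v)\<^sup>2 - 2 * gamma * ((1 - beta) * Qf v) + gamma * (gamma * K) * Qf v"
  proof -
    have "2 * gamma * ((1 - beta) * Qf v) \<le> 2 * gamma * (v \<bullet> (A *v v))"
      using vAv[of v] g unfolding A_def by simp
    moreover have "gamma\<^sup>2 * (norm (A *v v))\<^sup>2 \<le> gamma\<^sup>2 * (Phimax\<^sup>2 * ((1 + beta)\<^sup>2 * Qf v))"
      using Av_norm[of v] unfolding A_def by (intro mult_left_mono) auto
    ultimately show ?thesis by (simp add: K_def power2_eq_square mult_ac)
  qed
  also have "\<dots> \<le> (norm v)\<^sup>2 - 2 * gamma * ((1 - beta) * Qf v) + gamma * (1 - beta) * Qf v"
  proof -
    have "gamma * K * Qf v \<le> (1 - beta) * Qf v" using gK Qf_nn[of v] by (rule mult_right_mono)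
    then have "gamma * (gamma * K * Qf v) \<le> gamma * ((1 - beta) * Qf v)" using g by (intro mult_left_mono) auto
    then show ?thesis by (simp add: mult_ac)
  qed
  also have "\<dots> = (norm v)\<^sup>2 - gamma * (1 - beta) * Qf v" by (simp add: algebra_simps)
  also have "\<dots> \<le> (norm v)\<^sup>2 - gamma * (1 - beta) * (mu' * (norm v)\<^sup>2)"
    using Qf_eig[of v] g beta unfolding mu'_def by (simp add: mult_left_mono)
  finally show ?thesis unfolding A_def mu'_def by (simp add: algebra_simps)
qed

lemma A_invertible:
  assumes mu: "min_eigenvalue (Bmat rho phi) > 0"
  shows "invertible (TD_A pol P beta rho phi)"
  unfolding invertible_left_inverse matrix_left_invertible_ker
proof (intro allI impI)
  fix x assume "TD_A pol P beta rho phi *v x = 0"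
  then have "(1 - beta) * Qf x \<le> 0" using vAv[of x] by simp
  then have "Qf x \<le> 0" using beta by (simp add: mult_le_0_iff)
  then have "min_eigenvalue (Bmat rho phi) * (norm x)\<^sup>2 \<le> 0" using Qf_eig[of x] by simp
  then have "(norm x)\<^sup>2 \<le> 0" using mu by (simp add: mult_le_0_iff)
  then show "x = 0" by simp
qed

lemma A_theta_star:
  assumes mu: "min_eigenvalue (Bmat rho phi) > 0"
  shows "TD_A pol P beta rho phi *v theta_star pol P r beta rho phi = TD_b pol r rho phi"
proof -
  let ?A = "TD_A pol P beta rho phi"
  have "\<exists>A'. ?A ** A' = mat 1 \<and> A' ** ?A = mat 1" using A_invertible[OF mu] unfolding invertible_def .
  then have "?A ** matrix_inv ?A = mat 1" unfolding matrix_inv_def by (rule someI2_ex) auto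
  then show ?thesis unfolding theta_star_def by (simp add: matrix_vector_mul_assoc)
qed


lemma mean_update:
  "(\<Sum>x\<in>UNIV. pw pol P rho x *\<^sub>R Fupd r beta phi x th) = TD_b pol r rho phi - TD_A pol P beta rho phi *v th"
proof -
  have c: "(\<Sum>a\<in>UNIV. \<Sum>s'\<in>UNIV. pol s a * P s a s' * (r s a + beta * (th \<bullet> phi s') - th \<bullet> phi s))
     = (\<Sum>a\<in>UNIV. pol s a * r s a) - (phi s \<bullet> th - beta * (\<Sum>s'\<in>UNIV. Pp pol P s s' * (phi s' \<bullet> th)))" for s
  proof -
    have "(\<Sum>a\<in>UNIV. \<Sum>s'\<in>UNIV. pol s a * P s a s' * (r s a + beta * (th \<bullet> phi s') - th \<bullet> phi s))
       = (\<Sum>a\<in>UNIV. \<Sum>s'\<in>UNIV. pol s a * r s a * P s a s') + beta * (\<Sum>a\<in>UNIV. \<Sum>s'\<in>UNIV. pol s a * P s a s' * (th \<bullet> phi s'))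
         - (\<Sum>a\<in>UNIV. \<Sum>s'\<in>UNIV. pol s a * P s a s') * (th \<bullet> phi s)"
      by (simp add: algebra_simps sum.distrib sum_subtractf sum_distrib_left sum_distrib_right)
    also have "(\<Sum>a\<in>UNIV. \<Sum>s'\<in>UNIV. pol s a * r s a * P s a s') = (\<Sum>a\<in>UNIV. pol s a * r s a)"
      using P by (simp add: sum_distrib_left[symmetric])
    also have "(\<Sum>a\<in>UNIV. \<Sum>s'\<in>UNIV. pol s a * P s a s') = 1"
      using P pol by (simp add: sum_distrib_left[symmetric])
    also have "(\<Sum>a\<in>UNIV. \<Sum>s'\<in>UNIV. pol s a * P s a s' * (th \<bullet> phi s')) = (\<Sum>s'\<in>UNIV. Pp pol P s s' * (phi s' \<bullet> th))"
      by (subst sum.swap) (simp add: Pp_def sum_distrib_right inner_commute)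
    finally show ?thesis by (simp add: inner_commute)
  qed
  have "(\<Sum>x\<in>UNIV. pw pol P rho x *\<^sub>R Fupd r beta phi x th)
      = (\<Sum>s\<in>UNIV. \<Sum>a\<in>UNIV. \<Sum>s'\<in>UNIV. (rho s * (pol s a * P s a s' * (r s a + beta * (th \<bullet> phi s') - th \<bullet> phi s))) *\<^sub>R phi s)"
    unfolding sum_triple by (simp add: pw_def Fupd_def mult_ac)
  also have "\<dots> = (\<Sum>s\<in>UNIV. (rho s * ((\<Sum>a\<in>UNIV. pol s a * r s a) - (phi s \<bullet> th - beta * (\<Sum>s'\<in>UNIV. Pp pol P s s' * (phi s' \<bullet> th))))) *\<^sub>R phi s)"
    by (simp add: scaleR_sum_left[symmetric] sum_distrib_left[symmetric] c)
  also have "\<dots> = TD_b pol r rho phi - TD_A pol P beta rho phi *v th"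
    unfolding TD_b_eq TD_A_v' by (simp add: sum_subtractf[symmetric] algebra_simps scaleR_diff_left)
  finally show ?thesis .
qed

lemma pw_sum: "(\<Sum>x\<in>UNIV. pw pol P rho x) = 1"
proof -
  have "(\<Sum>x\<in>UNIV. pw pol P rho x) = (\<Sum>s\<in>UNIV. rho s * (\<Sum>a\<in>UNIV. pol s a * (\<Sum>s'\<in>UNIV. P s a s')))"
    unfolding sum_triple by (simp add: pw_def sum_distrib_left mult_ac)
  also have "\<dots> = 1" using P pol rho_sum by simp
  finally show ?thesis .
qed

lemma mean_update':
  assumes mu: "min_eigenvalue (Bmat rho phi) > 0"
  shows "(\<Sum>x\<in>UNIV. pw pol P rho x *\<^sub>R Fupd r beta phi x th)
       = - (TD_A pol P beta rho phi *v (th - theta_star pol P r beta rho phi))"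
  unfolding mean_update A_theta_star[OF mu, symmetric] by (simp add: matrix_vector_mult_diff_distrib)

lemma pw_nn: "pw pol P rho x \<ge> 0"
  using pol P rho_nn by (cases x) (auto simp: pw_def)
end




lemma td_Suc: "td_iter r beta phi gamma X th0 (Suc t) \<omega> =
   td_iter r beta phi gamma X th0 t \<omega> + gamma *\<^sub>R Fupd r beta phi (X (Suc t) \<omega>) (td_iter r beta phi gamma X th0 t \<omega>)"
  by (simp add: Fupd_def Let_def split: prod.split)

declare td_iter.simps(2)[simp del]

lemma Fupd_alt: "Fupd r beta phi x th = (r (fst x) (fst (snd x)) + beta * (th \<bullet> phi (snd (snd x))) - th \<bullet> phi (fst x)) *\<^sub>R phi (fst x)"
  by (simp add: Fupd_def split: prod.split)

lemma Fupd_meas: "(\<lambda>p. Fupd r beta phi (fst p) (snd p)) \<in> measurable (count_space (UNIV::('s::finite\<times>'act::finite\<times>'s) set) \<Otimes>\<^sub>M borel) borel"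
proof (rule measurable_pair_measure_countable1)
  fix x
  show "(\<lambda>y. Fupd r beta phi (fst (x, y)) (snd (x, y))) \<in> borel_measurable borel"
    unfolding Fupd_alt fst_conv snd_conv by (intro borel_measurable_continuous_onI continuous_intros)
qed (simp add: countable_finite)

lemma td_iter_meas:
  fixes X :: "nat \<Rightarrow> 'w \<Rightarrow> 's::finite \<times> 'act::finite \<times> 's"
  assumes "th0 \<in> borel_measurable N" "\<And>t. 1 \<le> t \<Longrightarrow> t \<le> n \<Longrightarrow> X t \<in> measurable N (count_space UNIV)"
  shows "td_iter r beta phi gamma X th0 n \<in> borel_measurable N"
  using assms(2)
proof (induction n)
  case 0 then show ?case using assms(1) by simp
next
  case (Suc n)
  have IH: "td_iter r beta phi gamma X th0 n \<in> borel_measurable N" using Suc by simp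
  have XS: "X (Suc n) \<in> measurable N (count_space UNIV)" using Suc by simp
  have "(\<lambda>\<omega>. Fupd r beta phi (fst (X (Suc n) \<omega>, td_iter r beta phi gamma X th0 n \<omega>)) (snd (X (Suc n) \<omega>, td_iter r beta phi gamma X th0 n \<omega>))) \<in> borel_measurable N"
    by (rule measurable_compose[OF measurable_Pair[OF XS IH] Fupd_meas])
  then have "(\<lambda>\<omega>. Fupd r beta phi (X (Suc n) \<omega>) (td_iter r beta phi gamma X th0 n \<omega>)) \<in> borel_measurable N" by simp
  then show ?case unfolding td_Suc using IH by measurable
qed


lemma prodbound:
  fixes u v a1 a2 c1 c2 :: real
  assumes "u \<ge> 0" "v \<ge> 0" "a1 \<ge> 0" "a2 \<ge> 0" "c1 \<ge> 0" "c2 \<ge> 0"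
  shows "(a1 * u + c1) * (a2 * v + c2) \<le> (a1\<^sup>2 + a2\<^sup>2 + c1\<^sup>2 + c2\<^sup>2) * (u\<^sup>2 + v\<^sup>2 + 1)"
proof -
  let ?p = "a1 * u + c1" and ?q = "a2 * v + c2"
  have "0 \<le> (?p - ?q)\<^sup>2" by simp
  then have "?p * ?q \<le> (?p\<^sup>2 + ?q\<^sup>2) / 2"
    by (simp add: power2_eq_square algebra_simps)
  also have "0 \<le> (a1*u - c1)\<^sup>2" by simp
  then have "?p\<^sup>2 \<le> 2 * (a1\<^sup>2 * u\<^sup>2) + 2 * c1\<^sup>2"
    by (simp add: power2_eq_square algebra_simps)
  moreover have "0 \<le> (a2 * v - c2)\<^sup>2" by simp
  then have "?q\<^sup>2 \<le> 2 * (a2\<^sup>2 * v\<^sup>2) + 2 * c2\<^sup>2"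
    by (simp add: power2_eq_square algebra_simps)
  ultimately have "?p * ?q \<le> a1\<^sup>2 * u\<^sup>2 + c1\<^sup>2 + a2\<^sup>2 * v\<^sup>2 + c2\<^sup>2" by simp
  also have "\<dots> \<le> (a1\<^sup>2 + a2\<^sup>2 + c1\<^sup>2 + c2\<^sup>2) * (u\<^sup>2 + v\<^sup>2 + 1)"
  proof -
    have "a1\<^sup>2 * u\<^sup>2 \<le> (a1\<^sup>2 + a2\<^sup>2 + c1\<^sup>2 + c2\<^sup>2) * u\<^sup>2" by (intro mult_right_mono) auto
    moreover have "a2\<^sup>2 * v\<^sup>2 \<le> (a1\<^sup>2 + a2\<^sup>2 + c1\<^sup>2 + c2\<^sup>2) * v\<^sup>2" by (intro mult_right_mono) auto
    moreover have "c1\<^sup>2 + c2\<^sup>2 \<le> (a1\<^sup>2 + a2\<^sup>2 + c1\<^sup>2 + c2\<^sup>2)" by simp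
    ultimately show ?thesis by (simp add: algebra_simps)
  qed
  finally show ?thesis .
qed

locale td_prob = td_alg pol P beta rho phi Phimax + prob_space M
  for pol :: "'s::finite \<Rightarrow> 'act::finite \<Rightarrow> real" and P beta rho and phi :: "'s \<Rightarrow> real^'d::finite"
    and Phimax and M :: "'w measure" +
  fixes r :: "'s \<Rightarrow> 'act \<Rightarrow> real" and Rmax gamma :: real and X :: "nat \<Rightarrow> 'w \<Rightarrow> 's \<times> 'act \<times> 's"
    and th0 :: "'w \<Rightarrow> real^'d"
  assumes r: "\<forall>s a. \<bar>r s a\<bar> \<le> Rmax"
    and mu_pos: "min_eigenvalue (Bmat rho phi) > 0"
    and X_rv: "\<forall>t\<ge>1. X t \<in> measurable M (count_space UNIV)"
    and th0_rv: "th0 \<in> borel_measurable M"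
    and indep: "indep_sets
                  (\<lambda>t. if t = 0 then {th0 -` A \<inter> space M | A. A \<in> sets borel}
                       else {X t -` A \<inter> space M | A. A \<in> sets (count_space UNIV)}) UNIV"
    and X_dist: "\<forall>t\<ge>1. \<forall>s a s'. measure M {\<omega>\<in>space M. X t \<omega> = (s, a, s')} = rho s * pol s a * P s a s'"
    and th0_L2: "integrable M (\<lambda>\<omega>. (norm (th0 \<omega>))\<^sup>2)"
    and gamma: "0 < gamma" "gamma \<le> (1 - beta) / ((1 + beta)\<^sup>2 * Phimax\<^sup>2)"
begin

abbreviation "th \<equiv> td_iter r beta phi gamma X th0"

lemma Pm: "Phimax \<ge> 0" using phi_bd norm_ge_zero order_trans by blast
lemma Rm: "Rmax \<ge> 0" using r abs_ge_zero order_trans by blast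

lemma Fupd_bound: "norm (Fupd r beta phi x v) \<le> Phimax * Rmax + (1 + beta) * Phimax\<^sup>2 * norm v"
proof -
  obtain s a s' where x: "x = (s, a, s')" by (cases x) auto
  have "\<bar>r s a + beta * (v \<bullet> phi s') - v \<bullet> phi s\<bar> \<le> \<bar>r s a\<bar> + beta * \<bar>v \<bullet> phi s'\<bar> + \<bar>v \<bullet> phi s\<bar>"
  proof -
    have "\<bar>r s a + beta * (v \<bullet> phi s') - v \<bullet> phi s\<bar> \<le> \<bar>r s a\<bar> + \<bar>beta * (v \<bullet> phi s')\<bar> + \<bar>v \<bullet> phi s\<bar>"
      by linarith
    then show ?thesis using beta by (simp add: abs_mult)
  qed
  also have "\<dots> \<le> Rmax + beta * (norm v * Phimax) + norm v * Phimax"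
  proof -
    have "\<bar>v \<bullet> phi s'\<bar> \<le> norm v * Phimax"
      using Cauchy_Schwarz_ineq2[of v "phi s'"] mult_left_mono[of "norm (phi s')" Phimax "norm v"] phi_bd
      by (simp add: mult.commute)
    moreover have "\<bar>v \<bullet> phi s\<bar> \<le> norm v * Phimax"
      using Cauchy_Schwarz_ineq2[of v "phi s"] mult_left_mono[of "norm (phi s)" Phimax "norm v"] phi_bd
      by (simp add: mult.commute)
    moreover have "\<bar>r s a\<bar> \<le> Rmax" using r by simp
    ultimately show ?thesis using beta mult_left_mono[of "\<bar>v \<bullet> phi s'\<bar>" "norm v * Phimax" beta] by linarith
  qed
  finally have c: "\<bar>r s a + beta * (v \<bullet> phi s') - v \<bullet> phi s\<bar> \<le> Rmax + (1 + beta) * Phimax * norm v"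
    by (simp add: algebra_simps)
  have "norm (Fupd r beta phi x v) = \<bar>r s a + beta * (v \<bullet> phi s') - v \<bullet> phi s\<bar> * norm (phi s)"
    by (simp add: x Fupd_def)
  also have "\<dots> \<le> (Rmax + (1 + beta) * Phimax * norm v) * Phimax"
    using c phi_bd by (intro mult_mono) auto
  finally show ?thesis by (simp add: algebra_simps power2_eq_square)
qed

lemma th_meas: "th t \<in> borel_measurable M"
  by (rule td_iter_meas[OF th0_rv]) (use X_rv in auto)

lemma th_step_bound: "norm (th (Suc t) \<omega>) \<le> (1 + gamma * (1 + beta) * Phimax\<^sup>2) * norm (th t \<omega>) + gamma * Phimax * Rmax"
proof -
  let ?F = "Fupd r beta phi (X (Suc t) \<omega>) (th t \<omega>)"
  have 1: "norm (th (Suc t) \<omega>) \<le> norm (th t \<omega>) + norm (gamma *\<^sub>R ?F)"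
    unfolding td_Suc by (rule norm_triangle_ineq)
  have 2: "norm (gamma *\<^sub>R ?F) = gamma * norm ?F" using gamma by simp
  have 3: "gamma * norm ?F \<le> gamma * (Phimax * Rmax + (1 + beta) * Phimax\<^sup>2 * norm (th t \<omega>))"
    using gamma by (intro mult_left_mono Fupd_bound) auto
  from 1 2 3 have "norm (th (Suc t) \<omega>) \<le> norm (th t \<omega>) + gamma * (Phimax * Rmax + (1 + beta) * Phimax\<^sup>2 * norm (th t \<omega>))"
    by linarith
  then show ?thesis by (simp add: algebra_simps)
qed

lemma th_L2: "integrable M (\<lambda>\<omega>. (norm (th t \<omega>))\<^sup>2)"
proof (induction t)
  case 0 then show ?case using th0_L2 by simp
next
  case (Suc t)
  define a where "a = 1 + gamma * (1 + beta) * Phimax\<^sup>2"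
  define c where "c = gamma * Phimax * Rmax"
  have c0: "c \<ge> 0" using gamma Pm Rm by (simp add: c_def)
  have a0: "a \<ge> 0" using gamma beta by (simp add: a_def)
  have "integrable M (\<lambda>\<omega>. 2 * a\<^sup>2 * (norm (th t \<omega>))\<^sup>2 + 2 * c\<^sup>2)"
    using Suc by (intro Bochner_Integration.integrable_add Bochner_Integration.integrable_mult_right finite_measure.integrable_const[OF finite_measure_axioms]) auto
  moreover have "(\<lambda>\<omega>. (norm (th (Suc t) \<omega>))\<^sup>2) \<in> borel_measurable M" using th_meas by measurable
  moreover have "AE \<omega> in M. norm ((norm (th (Suc t) \<omega>))\<^sup>2) \<le> norm (2 * a\<^sup>2 * (norm (th t \<omega>))\<^sup>2 + 2 * c\<^sup>2)"
  proof (rule AE_I2)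
    fix \<omega>
    have b: "norm (th (Suc t) \<omega>) \<le> a * norm (th t \<omega>) + c" using th_step_bound unfolding a_def c_def .
    have "(norm (th (Suc t) \<omega>))\<^sup>2 \<le> (a * norm (th t \<omega>) + c)\<^sup>2"
      using b by (intro power_mono) auto
    also have "\<dots> \<le> 2 * a\<^sup>2 * (norm (th t \<omega>))\<^sup>2 + 2 * c\<^sup>2"
    proof -
      have "0 \<le> (a * norm (th t \<omega>) - c)\<^sup>2" by simp
      then show ?thesis by (simp add: power2_eq_square algebra_simps)
    qed
    finally show "norm ((norm (th (Suc t) \<omega>))\<^sup>2) \<le> norm (2 * a\<^sup>2 * (norm (th t \<omega>))\<^sup>2 + 2 * c\<^sup>2)" by simp
  qed
  ultimately show ?case by (rule Bochner_Integration.integrable_bound)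
qed

lemma qint:
  assumes g: "g \<in> borel_measurable M"
    and b: "\<And>\<omega>. \<omega> \<in> space M \<Longrightarrow> \<bar>g \<omega>\<bar> \<le> K * ((norm (th i \<omega>))\<^sup>2 + (norm (th j \<omega>))\<^sup>2 + 1)"
  shows "integrable M g"
proof (rule Bochner_Integration.integrable_bound[OF _ g])
  show "integrable M (\<lambda>\<omega>. K * ((norm (th i \<omega>))\<^sup>2 + (norm (th j \<omega>))\<^sup>2 + 1))"
    using th_L2 by (intro Bochner_Integration.integrable_add Bochner_Integration.integrable_mult_right finite_measure.integrable_const[OF finite_measure_axioms]) auto
  show "AE \<omega> in M. norm (g \<omega>) \<le> norm (K * ((norm (th i \<omega>))\<^sup>2 + (norm (th j \<omega>))\<^sup>2 + 1))"
    using b by (intro AE_I2) (auto intro: order_trans[OF _ abs_ge_self])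
qed


definition Ev :: "nat \<Rightarrow> 'w set set" where
  "Ev t = (if t = 0 then {th0 -` A \<inter> space M | A. A \<in> sets borel}
           else {X t -` A \<inter> space M | A. A \<in> sets (count_space UNIV)})"

lemma indep_Ev: "indep_sets Ev UNIV"
proof -
  have "Ev = (\<lambda>t. if t = 0 then {th0 -` A \<inter> space M | A. A \<in> sets borel}
                       else {X t -` A \<inter> space M | A. A \<in> sets (count_space UNIV)})"
    by (rule ext) (simp add: Ev_def)
  then show ?thesis using indep by simp
qed

lemma Ev_stable: "Int_stable (Ev t)"
proof (cases "t = 0")
  case True
  show ?thesis unfolding Int_stable_def Ev_def using True
  proof (clarsimp)
    fix A B :: "(real^'d) set" assume "A \<in> sets borel" "B \<in> sets borel"
    then show "\<exists>C. th0 -` A \<inter> space M \<inter> (th0 -` B \<inter> space M) = th0 -` C \<inter> space M \<and> C \<in> sets borel"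
      by (intro exI[of _ "A \<inter> B"]) auto
  qed
next
  case False
  show ?thesis unfolding Int_stable_def Ev_def using False
  proof (clarsimp)
    fix A B :: "('s \<times> 'act \<times> 's) set"
    show "\<exists>C. X t -` A \<inter> space M \<inter> (X t -` B \<inter> space M) = X t -` C \<inter> space M"
      by (intro exI[of _ "A \<inter> B"]) auto
  qed
qed

lemma Ev_sub: "Ev t \<subseteq> Pow (space M)" by (auto simp: Ev_def)

definition Gm :: "nat \<Rightarrow> 'w measure" where
  "Gm j = sigma (space M) (\<Union>t\<in>{..<j}. Ev t)"

lemma UEv_sub: "(\<Union>t\<in>{..<j}. Ev t) \<subseteq> Pow (space M)" using Ev_sub by blast

lemma sets_Gm: "sets (Gm j) = sigma_sets (space M) (\<Union>t\<in>{..<j}. Ev t)"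
  unfolding Gm_def using UEv_sub by (rule sets_measure_of)

lemma space_Gm: "space (Gm j) = space M"
  unfolding Gm_def using UEv_sub by (rule space_measure_of)

lemma th_meas_G: "n < j \<Longrightarrow> th n \<in> borel_measurable (Gm j)"
proof (rule td_iter_meas)
  assume nj: "n < j"
  show "th0 \<in> borel_measurable (Gm j)"
  proof (rule measurableI)
    fix A :: "(real^'d) set" assume "A \<in> sets borel"
    then have "th0 -` A \<inter> space M \<in> Ev 0" by (auto simp: Ev_def)
    then have "th0 -` A \<inter> space M \<in> (\<Union>t\<in>{..<j}. Ev t)" using nj by auto
    then show "th0 -` A \<inter> space (Gm j) \<in> sets (Gm j)" unfolding sets_Gm space_Gm by auto
  qed simp
  fix t assume t: "1 \<le> t" "t \<le> n"
  show "X t \<in> measurable (Gm j) (count_space UNIV)"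
  proof (rule measurableI)
    fix A :: "('s \<times> 'act \<times> 's) set"
    have "X t -` A \<inter> space M \<in> Ev t" using t by (auto simp: Ev_def)
    then have "X t -` A \<inter> space M \<in> (\<Union>t\<in>{..<j}. Ev t)" using nj t by auto
    then show "X t -` A \<inter> space (Gm j) \<in> sets (Gm j)" unfolding sets_Gm space_Gm by auto
  qed simp
qed

lemma indep_G:
  assumes "1 \<le> j"
  shows "sets (Gm j) \<subseteq> events" "sigma_sets (space M) (Ev j) \<subseteq> events"
    "\<And>a b. a \<in> sets (Gm j) \<Longrightarrow> b \<in> sigma_sets (space M) (Ev j) \<Longrightarrow> prob (a \<inter> b) = prob a * prob b"
proof -
  let ?I = "\<lambda>b::bool. if b then {..<j} else {j}"
  have "indep_sets Ev (\<Union>b. ?I b)" by (rule indep_sets_mono_index[OF _ indep_Ev]) simp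
  then have "indep_sets (\<lambda>b. sigma_sets (space M) (\<Union>i\<in>?I b. Ev i)) UNIV"
    by (rule indep_sets_collect_sigma) (auto simp: Ev_stable disjoint_family_on_def)
  moreover have "(\<lambda>b. sigma_sets (space M) (\<Union>i\<in>?I b. Ev i)) = case_bool (sets (Gm j)) (sigma_sets (space M) (Ev j))"
    by (rule ext) (simp add: sets_Gm split: bool.split)
  ultimately have "indep_set (sets (Gm j)) (sigma_sets (space M) (Ev j))"
    unfolding indep_set_def by simp
  then have *: "sets (Gm j) \<subseteq> events \<and> sigma_sets (space M) (Ev j) \<subseteq> events \<and>
      (\<forall>a\<in>sets (Gm j). \<forall>b\<in>sigma_sets (space M) (Ev j). prob (a \<inter> b) = prob a * prob b)"
    unfolding indep_sets2_eq .
  then show "sets (Gm j) \<subseteq> events" "sigma_sets (space M) (Ev j) \<subseteq> events" by auto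
  fix a b assume "a \<in> sets (Gm j)" "b \<in> sigma_sets (space M) (Ev j)"
  then show "prob (a \<inter> b) = prob a * prob b" using * by blast
qed

lemma indep_int:
  assumes j: "1 \<le> j" and YG: "Y \<in> borel_measurable (Gm j)" and YM: "Y \<in> borel_measurable M"
    and Yi: "integrable M Y"
  shows "(\<integral>\<omega>. indicator {x} (X j \<omega>) * Y \<omega> \<partial>M) = prob {\<omega>\<in>space M. X j \<omega> = x} * (\<integral>\<omega>. Y \<omega> \<partial>M)"
proof -
  define I where "I \<omega> = (indicator {x} (X j \<omega>) :: real)" for \<omega>
  have Xj: "X j \<in> measurable M (count_space UNIV)" using X_rv j by simp
  have IM: "I \<in> borel_measurable M" unfolding I_def
    by (rule measurable_compose[OF Xj]) simp
  let ?S1 = "sigma_sets (space M) {I -` A \<inter> space M | A. A \<in> sets (borel :: real measure)}"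
  let ?S2 = "sigma_sets (space M) {Y -` A \<inter> space M | A. A \<in> sets (borel :: real measure)}"
  have S1: "?S1 \<subseteq> sigma_sets (space M) (Ev j)"
  proof (rule sigma_sets_mono, clarify)
    fix A :: "real set"
    have "I -` A \<inter> space M = X j -` ((\<lambda>y. indicator {x} y) -` A) \<inter> space M" unfolding I_def by auto
    also have "\<dots> \<in> Ev j" using j by (auto simp: Ev_def)
    finally show "I -` A \<inter> space M \<in> sigma_sets (space M) (Ev j)" by (rule sigma_sets.Basic)
  qed
  have S2: "?S2 \<subseteq> sets (Gm j)"
  proof -
    have "?S2 \<subseteq> sigma_sets (space M) (\<Union>t\<in>{..<j}. Ev t)"
    proof (rule sigma_sets_mono, clarify)
      fix A :: "real set" assume "A \<in> sets borel"
      then have "Y -` A \<inter> space (Gm j) \<in> sets (Gm j)" using YG by (rule measurable_sets[rotated])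
      then show "Y -` A \<inter> space M \<in> sigma_sets (space M) (\<Union>t\<in>{..<j}. Ev t)" by (simp add: space_Gm sets_Gm)
    qed
    then show ?thesis by (simp add: sets_Gm)
  qed
  have iv: "indep_var borel I borel Y"
    unfolding indep_var_eq
  proof (intro conjI)
    show "random_variable borel I" using IM by simp
    show "random_variable borel Y" using YM by simp
    show "indep_set ?S1 ?S2"
      unfolding indep_sets2_eq
    proof (intro conjI ballI)
      show "?S1 \<subseteq> events" using S1 indep_G(2)[OF j] by blast
      show "?S2 \<subseteq> events" using S2 indep_G(1)[OF j] by blast
      fix a b assume "a \<in> ?S1" "b \<in> ?S2"
      then have "a \<in> sigma_sets (space M) (Ev j)" "b \<in> sets (Gm j)" using S1 S2 by blast+
      then have "prob (b \<inter> a) = prob b * prob a" using indep_G(3)[OF j] by blast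
      then show "prob (a \<inter> b) = prob a * prob b" by (simp add: Int_commute mult.commute)
    qed
  qed
  have Ii: "integrable M I"
    by (rule finite_measure.integrable_const_bound[OF finite_measure_axioms, where B=1]) (auto simp: IM I_def)
  have "(\<integral>\<omega>. I \<omega> * Y \<omega> \<partial>M) = (\<integral>\<omega>. I \<omega> \<partial>M) * (\<integral>\<omega>. Y \<omega> \<partial>M)"
    by (rule indep_var_lebesgue_integral[OF iv Ii Yi])
  moreover have "(\<integral>\<omega>. I \<omega> \<partial>M) = prob {\<omega>\<in>space M. X j \<omega> = x}"
  proof -
    have "(\<integral>\<omega>. I \<omega> \<partial>M) = (\<integral>\<omega>. indicator {\<omega>\<in>space M. X j \<omega> = x} \<omega> \<partial>M)"
      by (rule Bochner_Integration.integral_cong) (auto simp: I_def indicator_def)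
    also have "\<dots> = prob {\<omega>\<in>space M. X j \<omega> = x}" by (simp add: Int_absorb2 subset_iff)
    finally show ?thesis .
  qed
  ultimately show ?thesis unfolding I_def by simp
qed

abbreviation "ts \<equiv> theta_star pol P r beta rho phi"
abbreviation "Am \<equiv> TD_A pol P beta rho phi"
definition mstep :: "real^'d \<Rightarrow> real^'d" where "mstep v = v - gamma *\<^sub>R (Am *v v)"

definition Yf :: "(real^'d \<Rightarrow> real^'d) \<Rightarrow> nat \<Rightarrow> nat \<Rightarrow> 's \<times> 'act \<times> 's \<Rightarrow> 'w \<Rightarrow> real" where
  "Yf L i n x \<omega> = (th i \<omega> - ts) \<bullet> L (th n \<omega> - ts + gamma *\<^sub>R Fupd r beta phi x (th n \<omega>))"

lemma Yf_meas:
  assumes L: "bounded_linear L" and "th i \<in> borel_measurable N" "th n \<in> borel_measurable N"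
  shows "Yf L i n x \<in> borel_measurable N"
  unfolding Yf_def
proof (rule borel_measurable_continuous_Pair[OF assms(2,3)])
  show "continuous_on UNIV (\<lambda>p. (fst p - ts) \<bullet> L (snd p - ts + gamma *\<^sub>R Fupd r beta phi x (snd p)))"
    unfolding Fupd_alt by (intro continuous_intros bounded_linear.continuous_on[OF L])
qed

lemma Yf_bound:
  assumes L: "bounded_linear L"
  obtains C where "\<And>\<omega>. \<bar>Yf L i n x \<omega>\<bar> \<le> C * ((norm (th i \<omega>))\<^sup>2 + (norm (th n \<omega>))\<^sup>2 + 1)"
proof -
  obtain K where K: "K > 0" "\<And>v. norm (L v) \<le> norm v * K" using bounded_linear.pos_bounded[OF L] by blast
  define a2 where "a2 = K * (1 + gamma * (1 + beta) * Phimax\<^sup>2)"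
  define c2 where "c2 = K * (norm ts + gamma * Phimax * Rmax)"
  have a2: "a2 \<ge> 0" using K gamma beta by (simp add: a2_def)
  have c2: "c2 \<ge> 0" using K gamma Pm Rm by (simp add: c2_def)
  have "\<bar>Yf L i n x \<omega>\<bar> \<le> (1 * norm (th i \<omega>) + norm ts) * (a2 * norm (th n \<omega>) + c2)" for \<omega>
  proof -
    let ?w = "th n \<omega> - ts + gamma *\<^sub>R Fupd r beta phi x (th n \<omega>)"
    have "\<bar>Yf L i n x \<omega>\<bar> \<le> norm (th i \<omega> - ts) * norm (L ?w)"
      unfolding Yf_def by (rule Cauchy_Schwarz_ineq2)
    also have "\<dots> \<le> (1 * norm (th i \<omega>) + norm ts) * (norm ?w * K)"
      using K(2)[of ?w] by (intro mult_mono) (auto intro: norm_triangle_ineq4)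
    also have "norm ?w \<le> norm (th n \<omega>) + norm ts + gamma * (Phimax * Rmax + (1 + beta) * Phimax\<^sup>2 * norm (th n \<omega>))"
    proof -
      have "norm ?w \<le> norm (th n \<omega> - ts) + norm (gamma *\<^sub>R Fupd r beta phi x (th n \<omega>))" by (rule norm_triangle_ineq)
      moreover have "norm (th n \<omega> - ts) \<le> norm (th n \<omega>) + norm ts" by (rule norm_triangle_ineq4)
      moreover have "norm (gamma *\<^sub>R Fupd r beta phi x (th n \<omega>)) \<le> gamma * (Phimax * Rmax + (1 + beta) * Phimax\<^sup>2 * norm (th n \<omega>))"
        using gamma Fupd_bound[of x "th n \<omega>"] by (simp add: mult_left_mono)
      ultimately show ?thesis by linarith
    qed
    then have "norm ?w * K \<le> (norm (th n \<omega>) + norm ts + gamma * (Phimax * Rmax + (1 + beta) * Phimax\<^sup>2 * norm (th n \<omega>))) * K"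
      using K by (intro mult_right_mono) auto
    then have "(1 * norm (th i \<omega>) + norm ts) * (norm ?w * K) \<le> (1 * norm (th i \<omega>) + norm ts) * ((norm (th n \<omega>) + norm ts + gamma * (Phimax * Rmax + (1 + beta) * Phimax\<^sup>2 * norm (th n \<omega>))) * K)"
      by (intro mult_left_mono) auto
    also have "\<dots> = (1 * norm (th i \<omega>) + norm ts) * (a2 * norm (th n \<omega>) + c2)"
      by (simp add: a2_def c2_def algebra_simps)
    finally show ?thesis .
  qed
  also have "(1 * norm (th i \<omega>) + norm ts) * (a2 * norm (th n \<omega>) + c2) \<le> (1\<^sup>2 + a2\<^sup>2 + (norm ts)\<^sup>2 + c2\<^sup>2) * ((norm (th i \<omega>))\<^sup>2 + (norm (th n \<omega>))\<^sup>2 + 1)" for \<omega>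
    by (rule prodbound) (auto simp: a2 c2)
  finally show ?thesis by (rule that)
qed

lemma sum_ind: "(\<Sum>x\<in>(UNIV::('s\<times>'act\<times>'s) set). indicator {x} a * f x) = (f a :: real)"
proof -
  have "(\<Sum>x\<in>UNIV. indicator {x} a * f x) = (\<Sum>x\<in>UNIV. if a = x then f x else 0)"
    by (rule sum.cong) (auto simp: indicator_def)
  also have "\<dots> = f a" by (subst sum.delta') auto
  finally show ?thesis .
qed

lemma pw_prob: "1 \<le> j \<Longrightarrow> prob {\<omega>\<in>space M. X j \<omega> = x} = pw pol P rho x"
  using X_dist by (cases x) (auto simp: pw_def)

lemma key:
  assumes ij: "i \<le> n" and L: "bounded_linear L"
  shows "(\<integral>\<omega>. (th i \<omega> - ts) \<bullet> L (th (Suc n) \<omega> - ts) \<partial>M) = (\<integral>\<omega>. (th i \<omega> - ts) \<bullet> L (mstep (th n \<omega> - ts)) \<partial>M)"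
proof -
  have YM: "Yf L i n x \<in> borel_measurable M" for x using Yf_meas[OF L th_meas th_meas] .
  have YG: "Yf L i n x \<in> borel_measurable (Gm (Suc n))" for x using Yf_meas[OF L th_meas_G th_meas_G] ij by auto
  have Yi: "integrable M (Yf L i n x)" for x
  proof -
    obtain C where C: "\<And>\<omega>. \<bar>Yf L i n x \<omega>\<bar> \<le> C * ((norm (th i \<omega>))\<^sup>2 + (norm (th n \<omega>))\<^sup>2 + 1)"
      using Yf_bound[OF L] by blast
    show ?thesis by (rule qint[OF YM C])
  qed
  have IYi: "integrable M (\<lambda>\<omega>. indicator {x} (X (Suc n) \<omega>) * Yf L i n x \<omega>)" for x
  proof -
    obtain C where C: "\<And>\<omega>. \<bar>Yf L i n x \<omega>\<bar> \<le> C * ((norm (th i \<omega>))\<^sup>2 + (norm (th n \<omega>))\<^sup>2 + 1)"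
      using Yf_bound[OF L] by blast
    have Xm: "X (Suc n) \<in> measurable M (count_space UNIV)" using X_rv by simp
    have m: "(\<lambda>\<omega>. indicator {x} (X (Suc n) \<omega>) * Yf L i n x \<omega>) \<in> borel_measurable M"
      using YM measurable_compose[OF Xm, of "indicator {x}" borel] by measurable
    show ?thesis
    proof (rule qint[OF m])
      fix \<omega>
      have "\<bar>indicator {x} (X (Suc n) \<omega>) * Yf L i n x \<omega>\<bar> \<le> \<bar>Yf L i n x \<omega>\<bar>" by (simp add: indicator_def)
      then show "\<bar>indicator {x} (X (Suc n) \<omega>) * Yf L i n x \<omega>\<bar> \<le> C * ((norm (th i \<omega>))\<^sup>2 + (norm (th n \<omega>))\<^sup>2 + 1)"
        using C[of \<omega>] by linarith
    qed
  qed
  have pt1: "(th i \<omega> - ts) \<bullet> L (th (Suc n) \<omega> - ts) = (\<Sum>x\<in>UNIV. indicator {x} (X (Suc n) \<omega>) * Yf L i n x \<omega>)" for \<omega>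
    unfolding sum_ind Yf_def td_Suc by (simp add: algebra_simps)
  have pt2: "(\<Sum>x\<in>UNIV. pw pol P rho x * Yf L i n x \<omega>) = (th i \<omega> - ts) \<bullet> L (mstep (th n \<omega> - ts))" for \<omega>
  proof -
    have lin: "linear L" using L by (rule bounded_linear.linear)
    let ?w = "th n \<omega> - ts"
    have "(\<Sum>x\<in>UNIV. pw pol P rho x * Yf L i n x \<omega>)
        = (th i \<omega> - ts) \<bullet> L (\<Sum>x\<in>UNIV. pw pol P rho x *\<^sub>R (?w + gamma *\<^sub>R Fupd r beta phi x (th n \<omega>)))"
      unfolding Yf_def linear_sum[OF lin] linear_scale[OF lin] inner_sum_right by (simp add: mult_ac)
    also have "(\<Sum>x\<in>UNIV. pw pol P rho x *\<^sub>R (?w + gamma *\<^sub>R Fupd r beta phi x (th n \<omega>)))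
        = (\<Sum>x\<in>UNIV. pw pol P rho x) *\<^sub>R ?w + gamma *\<^sub>R (\<Sum>x\<in>UNIV. pw pol P rho x *\<^sub>R Fupd r beta phi x (th n \<omega>))"
      by (simp add: scaleR_add_right sum.distrib scaleR_sum_left scaleR_sum_right mult.commute)
    also have "\<dots> = mstep ?w"
      unfolding pw_sum mean_update'[OF mu_pos] mstep_def by simp
    finally show ?thesis .
  qed
  have "(\<integral>\<omega>. (th i \<omega> - ts) \<bullet> L (th (Suc n) \<omega> - ts) \<partial>M)
      = (\<integral>\<omega>. (\<Sum>x\<in>UNIV. indicator {x} (X (Suc n) \<omega>) * Yf L i n x \<omega>) \<partial>M)"
    unfolding pt1 ..
  also have "\<dots> = (\<Sum>x\<in>UNIV. (\<integral>\<omega>. indicator {x} (X (Suc n) \<omega>) * Yf L i n x \<omega> \<partial>M))"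
    by (rule Bochner_Integration.integral_sum) (rule IYi)
  also have "\<dots> = (\<Sum>x\<in>UNIV. pw pol P rho x * (\<integral>\<omega>. Yf L i n x \<omega> \<partial>M))"
    by (rule sum.cong[OF refl]) (simp add: indep_int[OF _ YG YM Yi] pw_prob)
  also have "\<dots> = (\<integral>\<omega>. (\<Sum>x\<in>UNIV. pw pol P rho x * Yf L i n x \<omega>) \<partial>M)"
    by (subst Bochner_Integration.integral_sum) (auto intro: Yi)
  also have "\<dots> = (\<integral>\<omega>. (th i \<omega> - ts) \<bullet> L (mstep (th n \<omega> - ts)) \<partial>M)"
    unfolding pt2 ..
  finally show ?thesis .
qed

lemma mstep_bl: "bounded_linear mstep"
proof -
  have "bounded_linear (\<lambda>v. v - gamma *\<^sub>R (Am *v v))"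
    by (intro bounded_linear_sub bounded_linear_ident bounded_linear_scaleR_right[THEN bounded_linear_compose]
        matrix_vector_mul_bounded_linear)
  then show ?thesis unfolding mstep_def[abs_def] .
qed

lemma iter:
  assumes L: "bounded_linear L"
  shows "(\<integral>\<omega>. (th i \<omega> - ts) \<bullet> L (th (i + l) \<omega> - ts) \<partial>M) = (\<integral>\<omega>. (th i \<omega> - ts) \<bullet> L ((mstep ^^ l) (th i \<omega> - ts)) \<partial>M)"
  using L
proof (induction l arbitrary: L)
  case 0 then show ?case by simp
next
  case (Suc l)
  have bl: "bounded_linear (\<lambda>v. L (mstep v))" using bounded_linear_compose[OF Suc.prems mstep_bl] by (simp add: o_def)
  have "(\<integral>\<omega>. (th i \<omega> - ts) \<bullet> L (th (i + Suc l) \<omega> - ts) \<partial>M) = (\<integral>\<omega>. (th i \<omega> - ts) \<bullet> L (mstep (th (i + l) \<omega> - ts)) \<partial>M)"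
    using key[of i "i + l" L] Suc.prems by simp
  also have "\<dots> = (\<integral>\<omega>. (th i \<omega> - ts) \<bullet> L (mstep ((mstep ^^ l) (th i \<omega> - ts))) \<partial>M)"
    using Suc.IH[OF bl] .
  finally show ?case by simp
qed

definition "rho' = 1 - gamma * (1 - beta) * min_eigenvalue (Bmat rho phi)"
definition "qq = sqrt rho'"

lemma mstep_sq: "(norm (mstep v))\<^sup>2 \<le> rho' * (norm v)\<^sup>2"
  unfolding mstep_def rho'_def by (rule contraction[OF mu_pos gamma])

lemma rho'_nn: "rho' \<ge> 0"
proof -
  have "(norm (mstep (axis undefined 1 :: real^'d)))\<^sup>2 \<le> rho' * 1" using mstep_sq[of "axis undefined 1"] by (simp add: norm_axis_1)
  moreover have "(norm (mstep (axis undefined 1 :: real^'d)))\<^sup>2 \<ge> 0" by simp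
  ultimately show ?thesis by linarith
qed

lemma rho'_lt1: "rho' < 1"
proof -
  have "gamma * (1 - beta) * min_eigenvalue (Bmat rho phi) > 0"
    using gamma beta mu_pos by (intro mult_pos_pos) auto
  then show ?thesis unfolding rho'_def by linarith
qed

lemma qq0: "0 \<le> qq" unfolding qq_def using rho'_nn by simp
lemma qq1: "qq < 1" unfolding qq_def using rho'_lt1 by simp
lemma qq2: "qq\<^sup>2 = rho'" unfolding qq_def using rho'_nn by simp
lemmas qq = qq0 qq1 qq2

lemma mstep_norm: "norm (mstep v) \<le> qq * norm v"
proof -
  have e: "(qq * norm v)\<^sup>2 = rho' * (norm v)\<^sup>2" by (simp only: power_mult_distrib qq2)
  have "(norm (mstep v))\<^sup>2 \<le> (qq * norm v)\<^sup>2" unfolding e by (rule mstep_sq)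
  moreover have "0 \<le> qq * norm v" using qq0 by simp
  ultimately show ?thesis by (rule power2_le_imp_le)
qed

lemma mpow_norm: "norm ((mstep ^^ l) v) \<le> qq ^ l * norm v"
proof (induction l)
  case 0 then show ?case by simp
next
  case (Suc l)
  have "norm ((mstep ^^ Suc l) v) = norm (mstep ((mstep ^^ l) v))" by simp
  also have "\<dots> \<le> qq * norm ((mstep ^^ l) v)" by (rule mstep_norm)
  also have "\<dots> \<le> qq * (qq ^ l * norm v)" using Suc qq0 by (rule mult_left_mono)
  also have "\<dots> = qq ^ Suc l * norm v" by simp
  finally show ?case .
qed

lemma mpow_bl: "bounded_linear (mstep ^^ l)"
proof (induction l)
  case 0 then show ?case by (simp add: bounded_linear_ident[unfolded id_def[symmetric]])
next
  case (Suc l)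
  then show ?case using bounded_linear_compose[OF mstep_bl Suc] by (simp add: o_def)
qed

lemma zLz_int:
  assumes L: "bounded_linear L"
  shows "integrable M (\<lambda>\<omega>. (th i \<omega> - ts) \<bullet> L (th i \<omega> - ts))"
proof -
  obtain K where K: "K > 0" "\<And>v. norm (L v) \<le> norm v * K" using bounded_linear.pos_bounded[OF L] by blast
  have m: "(\<lambda>\<omega>. (th i \<omega> - ts) \<bullet> L (th i \<omega> - ts)) \<in> borel_measurable M"
    by (rule borel_measurable_continuous_Pair[OF th_meas th_meas, where H="\<lambda>a b. (a - ts) \<bullet> L (b - ts)"])
       (intro continuous_intros bounded_linear.continuous_on[OF L])
  show ?thesis
  proof (rule qint[OF m, where i=i and j=i])
    fix \<omega>
    have "\<bar>(th i \<omega> - ts) \<bullet> L (th i \<omega> - ts)\<bar> \<le> norm (th i \<omega> - ts) * (norm (th i \<omega> - ts) * K)"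
    proof -
      have "\<bar>(th i \<omega> - ts) \<bullet> L (th i \<omega> - ts)\<bar> \<le> norm (th i \<omega> - ts) * norm (L (th i \<omega> - ts))"
        by (rule Cauchy_Schwarz_ineq2)
      also have "\<dots> \<le> norm (th i \<omega> - ts) * (norm (th i \<omega> - ts) * K)"
        using K(2) by (intro mult_left_mono) auto
      finally show ?thesis .
    qed
    also have "\<dots> \<le> (1 * norm (th i \<omega>) + norm ts) * (K * norm (th i \<omega>) + K * norm ts)"
    proof -
      have t: "norm (th i \<omega> - ts) \<le> 1 * norm (th i \<omega>) + norm ts" using norm_triangle_ineq4[of "th i \<omega>" ts] by simp
      have "norm (th i \<omega> - ts) * K \<le> (1 * norm (th i \<omega>) + norm ts) * K" using t K by (intro mult_right_mono) auto
      then have t2: "norm (th i \<omega> - ts) * K \<le> K * norm (th i \<omega>) + K * norm ts" by (simp add: algebra_simps)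
      show ?thesis using t t2 K by (intro mult_mono) auto
    qed
    also have "\<dots> \<le> (1\<^sup>2 + K\<^sup>2 + (norm ts)\<^sup>2 + (K * norm ts)\<^sup>2) * ((norm (th i \<omega>))\<^sup>2 + (norm (th i \<omega>))\<^sup>2 + 1)"
      using K by (intro prodbound) auto
    finally show "\<bar>(th i \<omega> - ts) \<bullet> L (th i \<omega> - ts)\<bar> \<le> (1\<^sup>2 + K\<^sup>2 + (norm ts)\<^sup>2 + (K * norm ts)\<^sup>2) * ((norm (th i \<omega>))\<^sup>2 + (norm (th i \<omega>))\<^sup>2 + 1)" .
  qed
qed

lemma pair_bound:
  assumes "i \<le> j"
  shows "(\<integral>\<omega>. (th i \<omega> - ts) \<bullet> (th j \<omega> - ts) \<partial>M) \<le> qq ^ (j - i) * (\<integral>\<omega>. (norm (th i \<omega> - ts))\<^sup>2 \<partial>M)"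
proof -
  have e: "i + (j - i) = j" using assms by simp
  have "(\<integral>\<omega>. (th i \<omega> - ts) \<bullet> (th j \<omega> - ts) \<partial>M) = (\<integral>\<omega>. (th i \<omega> - ts) \<bullet> id (th (i + (j - i)) \<omega> - ts) \<partial>M)"
    by (simp add: e)
  also have "\<dots> = (\<integral>\<omega>. (th i \<omega> - ts) \<bullet> id ((mstep ^^ (j - i)) (th i \<omega> - ts)) \<partial>M)"
    by (rule iter[OF bounded_linear_ident[unfolded id_def[symmetric]]])
  also have "\<dots> \<le> (\<integral>\<omega>. qq ^ (j - i) * (norm (th i \<omega> - ts))\<^sup>2 \<partial>M)"
  proof (rule integral_mono)
    have bl: "bounded_linear (mstep ^^ (j - i))" by (rule mpow_bl)
    show "integrable M (\<lambda>\<omega>. (th i \<omega> - ts) \<bullet> id ((mstep ^^ (j - i)) (th i \<omega> - ts)))"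
      using zLz_int[OF bl] by simp
    have "integrable M (\<lambda>\<omega>. (th i \<omega> - ts) \<bullet> id (th i \<omega> - ts))"
      using zLz_int[OF bounded_linear_ident[unfolded id_def[symmetric]]] .
    then show "integrable M (\<lambda>\<omega>. qq ^ (j - i) * (norm (th i \<omega> - ts))\<^sup>2)"
      by (intro Bochner_Integration.integrable_mult_right) (simp add: power2_norm_eq_inner)
    fix \<omega>
    have "(th i \<omega> - ts) \<bullet> id ((mstep ^^ (j - i)) (th i \<omega> - ts)) \<le> norm (th i \<omega> - ts) * norm ((mstep ^^ (j - i)) (th i \<omega> - ts))"
      by (simp add: norm_cauchy_schwarz)
    also have "\<dots> \<le> norm (th i \<omega> - ts) * (qq ^ (j - i) * norm (th i \<omega> - ts))"
      by (intro mult_left_mono mpow_norm) auto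
    finally show "(th i \<omega> - ts) \<bullet> id ((mstep ^^ (j - i)) (th i \<omega> - ts)) \<le> qq ^ (j - i) * (norm (th i \<omega> - ts))\<^sup>2"
      by (simp add: power2_eq_square mult_ac)
  qed
  also have "\<dots> = qq ^ (j - i) * (\<integral>\<omega>. (norm (th i \<omega> - ts))\<^sup>2 \<partial>M)" by simp
  finally show ?thesis .
qed

lemma geo:
  fixes q :: real
  assumes "0 \<le> q" "q < 1"
  shows "(\<Sum>j\<in>{i+1..i+m}. q ^ (j - i)) \<le> 1 / (1 - q)"
proof -
  have "(\<Sum>j\<in>{i+1..i+m}. q ^ (j - i)) = (\<Sum>j\<in>{1+i..m+i}. q ^ (j - i))" by (simp add: add.commute)
  also have "\<dots> = (\<Sum>l\<in>{1..m}. q ^ l)" by (subst sum.shift_bounds_cl_nat_ivl) simp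
  also have "\<dots> \<le> (\<Sum>l\<in>{..<m+1}. q ^ l)" using assms by (intro sum_mono2) auto
  also have "\<dots> = (1 - q ^ (m+1)) / (1 - q)" using assms by (subst sum_gp_strict) auto
  also have "\<dots> \<le> 1 / (1 - q)" using assms by (intro divide_right_mono) auto
  finally show ?thesis .
qed

lemma factor: "1 / (1 - qq) \<le> 2 / (gamma * (1 - beta) * min_eigenvalue (Bmat rho phi))"
proof -
  define c where "c = gamma * (1 - beta) * min_eigenvalue (Bmat rho phi)"
  have cp: "c > 0" unfolding c_def using gamma beta mu_pos by (intro mult_pos_pos) auto
  have "1 - qq\<^sup>2 = c" unfolding qq2 rho'_def c_def by simp
  moreover have "1 - qq\<^sup>2 \<le> 2 * (1 - qq)"
  proof -
    have "0 \<le> (1 - qq)\<^sup>2" by simp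
    then show ?thesis by (simp add: power2_eq_square algebra_simps)
  qed
  ultimately have "c \<le> 2 * (1 - qq)" by simp
  then show ?thesis unfolding c_def[symmetric] using cp qq1 by (simp add: field_simps)
qed

lemma main_loc:
  "(\<Sum>i\<in>{k+1..k+N-1}. \<Sum>j\<in>{i+1..k+N}. (\<integral>\<omega>. (th i \<omega> - ts) \<bullet> (th j \<omega> - ts) \<partial>M))
     \<le> 2 / (gamma * (1 - beta) * min_eigenvalue (Bmat rho phi)) * (\<Sum>i\<in>{k+1..k+N}. (\<integral>\<omega>. (norm (th i \<omega> - ts))\<^sup>2 \<partial>M))"
proof -
  define C where "C = 2 / (gamma * (1 - beta) * min_eigenvalue (Bmat rho phi))"
  define E where "E i = (\<integral>\<omega>. (norm (th i \<omega> - ts))\<^sup>2 \<partial>M)" for i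
  have E0: "E i \<ge> 0" for i unfolding E_def by (rule integral_nonneg_AE) auto
  have C0: "C \<ge> 0" unfolding C_def using gamma beta mu_pos by simp
  have inner: "(\<Sum>j\<in>{i+1..k+N}. (\<integral>\<omega>. (th i \<omega> - ts) \<bullet> (th j \<omega> - ts) \<partial>M)) \<le> C * E i"
    if i: "i \<in> {k+1..k+N-1}" for i
  proof -
    have "(\<Sum>j\<in>{i+1..k+N}. (\<integral>\<omega>. (th i \<omega> - ts) \<bullet> (th j \<omega> - ts) \<partial>M)) \<le> (\<Sum>j\<in>{i+1..k+N}. qq ^ (j - i) * E i)"
      unfolding E_def by (intro sum_mono pair_bound) auto
    also have "\<dots> = (\<Sum>j\<in>{i+1..i+(k+N-i)}. qq ^ (j - i)) * E i"
    proof -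
      have "i \<le> k + N" using i by auto
      then have eq: "i + (k + N - i) = k + N" by simp
      show ?thesis unfolding eq by (simp add: sum_distrib_right)
    qed
    also have "\<dots> \<le> 1 / (1 - qq) * E i"
      using geo[OF qq0 qq1] E0 by (intro mult_right_mono) auto
    also have "\<dots> \<le> C * E i" unfolding C_def using factor E0 by (intro mult_right_mono) auto
    finally show ?thesis .
  qed
  have "(\<Sum>i\<in>{k+1..k+N-1}. \<Sum>j\<in>{i+1..k+N}. (\<integral>\<omega>. (th i \<omega> - ts) \<bullet> (th j \<omega> - ts) \<partial>M)) \<le> (\<Sum>i\<in>{k+1..k+N-1}. C * E i)"
    by (rule sum_mono) (rule inner)
  also have "\<dots> \<le> (\<Sum>i\<in>{k+1..k+N}. C * E i)"
    using C0 E0 by (intro sum_mono2) auto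
  also have "\<dots> = C * (\<Sum>i\<in>{k+1..k+N}. E i)" by (simp add: sum_distrib_left)
  finally show ?thesis unfolding C_def E_def .
qed
end


theorem mainTheorem12:
  fixes M :: "'w measure"
    and pol :: "'s::finite \<Rightarrow> 'act::finite \<Rightarrow> real"
    and P :: "'s \<Rightarrow> 'act \<Rightarrow> 's \<Rightarrow> real"
    and r :: "'s \<Rightarrow> 'act \<Rightarrow> real"
    and Rmax beta Phimax gamma :: real
    and rho :: "'s \<Rightarrow> real"
    and phi :: "'s \<Rightarrow> real^'d::finite"
    and X :: "nat \<Rightarrow> 'w \<Rightarrow> 's \<times> 'act \<times> 's"
    and th0 :: "'w \<Rightarrow> real^'d"
    and k N :: nat
  assumes M: "prob_space M"
    and pol: "\<forall>s a. pol s a \<ge> 0" "\<forall>s. (\<Sum>a\<in>UNIV. pol s a) = 1"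
    and P: "\<forall>s a s'. P s a s' \<ge> 0" "\<forall>s a. (\<Sum>s'\<in>UNIV. P s a s') = 1"
    and r: "\<forall>s a. \<bar>r s a\<bar> \<le> Rmax"
    and beta: "0 < beta" "beta < 1"
    and irred: "irreducible_chain (Ppi pol P)"
    and stat: "stationary_dist (Ppi pol P) rho"
    and phi_bd: "\<forall>s. norm (phi s) \<le> Phimax"
    and rank: "rank (feat_matrix phi) = CARD('d)"
    and mu_pos: "min_eigenvalue (Bmat rho phi) > 0"
    and X_rv: "\<forall>t\<ge>1. X t \<in> measurable M (count_space UNIV)"
    and th0_rv: "th0 \<in> borel_measurable M"
    and indep: "prob_space.indep_sets M
                  (\<lambda>t. if t = 0 then {th0 -` A \<inter> space M | A. A \<in> sets borel}
                       else {X t -` A \<inter> space M | A. A \<in> sets (count_space UNIV)}) UNIV"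
    and X_dist: "\<forall>t\<ge>1. \<forall>s a s'. measure M {\<omega>\<in>space M. X t \<omega> = (s, a, s')} = rho s * pol s a * P s a s'"
    and th0_L2: "integrable M (\<lambda>\<omega>. (norm (th0 \<omega>))\<^sup>2)"
    and gamma: "0 < gamma" "gamma \<le> (1 - beta) / ((1 + beta)\<^sup>2 * Phimax\<^sup>2)"
    and N: "N \<ge> 1"
  shows "(\<Sum>i\<in>{k+1..k+N-1}. \<Sum>j\<in>{i+1..k+N}.
            integral\<^sup>L M (\<lambda>\<omega>. (td_iter r beta phi gamma X th0 i \<omega> - theta_star pol P r beta rho phi)
                             \<bullet> (td_iter r beta phi gamma X th0 j \<omega> - theta_star pol P r beta rho phi)))
         \<le> 2 / (gamma * (1 - beta) * min_eigenvalue (Bmat rho phi)) *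
           (\<Sum>i\<in>{k+1..k+N}.
              integral\<^sup>L M (\<lambda>\<omega>. (norm (td_iter r beta phi gamma X th0 i \<omega> - theta_star pol P r beta rho phi))\<^sup>2))"
  proof -
  interpret td_prob pol P beta rho phi Phimax M r Rmax gamma X th0
    by (intro td_prob.intro td_alg.intro td_prob_axioms.intro)
       (fact M pol P r beta stat phi_bd mu_pos X_rv th0_rv indep X_dist th0_L2 gamma)+
  show ?thesis using main_loc[of k N] by simp
qed

end
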